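(* Let $\mathcal{C}$ be a binary $[n,n/2]$ even formally self-dual code, and let $f_{\mathcal{C}}(t)=W_{\mathcal{C}}(\sqrt{1+t},\sqrt{1-t})$ for $0<t<1$. Then $$f_{\mathcal{C}}(t)=2^{n/2}\sum_{r=0}^{\lfloor n/8\rfloor}a_r\,(t^4-t^2+1)^r,$$ where $a_r\in\mathbb{Q}$ and $\sum_{r=0}^{\lfloor n/8\rfloor}a_r=1$.
   Context: For a binary linear code $\mathcal{C}\subseteq\mathbb{F}_2^n$, $W_{\mathcal{C}}(x,y)=\sum_{w=0}^n A_w x^{n-w}y^w$ with $A_w$ the number of codewords of Hamming weight $w$. $\mathcal{C}$ is formally self-dual if $W_{\mathcal{C}}=W_{\mathcal{C}^\perp}$, and even if all codewords have even Hamming weight. *)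

theory Defs
  imports Complex_Main
begin

text \<open>Vectors of F_2^n are boolean lists of length n (True = 1).\<close>

definition vecs :: "nat \<Rightarrow> bool list set" where
  "vecs n = {v. length v = n}"

definition vadd :: "bool list \<Rightarrow> bool list \<Rightarrow> bool list" where
  "vadd u v = map2 (\<noteq>) u v"

definition zero_vec :: "nat \<Rightarrow> bool list" where
  "zero_vec n = replicate n False"

definition hweight :: "bool list \<Rightarrow> nat" where
  "hweight v = length (filter id v)"

text \<open>Standard inner product over F_2 is zero iff this count is even.\<close>
definition ip_count :: "bool list \<Rightarrow> bool list \<Rightarrow> nat" where
  "ip_count u v = length (filter id (map2 (\<and>) u v))"

text \<open>Binary linear code of length n (over F_2, a subspace = nonempty subset closed under addition).\<close>
definition linear_code :: "nat \<Rightarrow> bool list set \<Rightarrow> bool" where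
  "linear_code n C \<longleftrightarrow> C \<subseteq> vecs n \<and> zero_vec n \<in> C \<and> (\<forall>u\<in>C. \<forall>v\<in>C. vadd u v \<in> C)"

definition dual_code :: "nat \<Rightarrow> bool list set \<Rightarrow> bool list set" where
  "dual_code n C = {v \<in> vecs n. \<forall>c\<in>C. even (ip_count v c)}"

definition weight_count :: "bool list set \<Rightarrow> nat \<Rightarrow> nat" where
  "weight_count C w = card {c \<in> C. hweight c = w}"

definition weight_enum :: "nat \<Rightarrow> bool list set \<Rightarrow> real \<Rightarrow> real \<Rightarrow> real" where
  "weight_enum n C x y = (\<Sum>c\<in>C. x ^ (n - hweight c) * y ^ (hweight c))"

text \<open>Formally self-dual: W_C = W_{C^perp} as polynomials, i.e. equal coefficients A_w.\<close>
definition formally_self_dual :: "nat \<Rightarrow> bool list set \<Rightarrow> bool" where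
  "formally_self_dual n C \<longleftrightarrow> (\<forall>w. weight_count C w = weight_count (dual_code n C) w)"

definition even_code :: "bool list set \<Rightarrow> bool" where
  "even_code C \<longleftrightarrow> (\<forall>c\<in>C. even (hweight c))"

end

theory Submission
  imports Defs "HOL-Computational_Algebra.Polynomial"
begin


lemma hweight_Nil[simp]: "hweight [] = 0" by (simp add: hweight_def)
lemma hweight_Cons[simp]: "hweight (b # v) = (if b then 1 else 0) + hweight v"
  by (simp add: hweight_def)
lemma ip_Nil[simp]: "ip_count [] v = 0" "ip_count u [] = 0"
  by (simp_all add: ip_count_def)
lemma ip_Cons[simp]: "ip_count (a # u) (b # v) = (if a \<and> b then 1 else 0) + ip_count u v"
  by (simp add: ip_count_def)
lemma vadd_Cons[simp]: "vadd (a # u) (b # v) = (a \<noteq> b) # vadd u v"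
  by (simp add: vadd_def)
lemma vadd_Nil[simp]: "vadd [] v = []" by (simp add: vadd_def)
lemma length_vadd[simp]: "length (vadd u v) = min (length u) (length v)"
  by (simp add: vadd_def)
lemma hweight_le: "hweight v \<le> length v"
  by (simp add: hweight_def)

lemma ip_vadd:
  "length u = length a \<Longrightarrow> length u = length b \<Longrightarrow>
   even (ip_count u (vadd a b)) \<longleftrightarrow> (even (ip_count u a) \<longleftrightarrow> even (ip_count u b))"
proof (induction u arbitrary: a b)
  case Nil then show ?case by simp
next
  case (Cons x u)
  then obtain a0 a' b0 b' where "a = a0 # a'" "b = b0 # b'"
    by (metis length_Suc_conv)
  with Cons show ?case by auto
qed

lemma vadd_vadd: "length a = length b \<Longrightarrow> vadd a (vadd a b) = b"
proof (induction a arbitrary: b)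
  case Nil then show ?case by simp
next
  case (Cons x a)
  then obtain b0 b' where "b = b0 # b'" by (metis length_Suc_conv)
  with Cons show ?case by auto
qed

lemma finite_vecs: "finite (vecs n)"
proof -
  have "vecs n = {xs. set xs \<subseteq> (UNIV::bool set) \<and> length xs = n}" by (auto simp: vecs_def)
  then show ?thesis using finite_lists_length_eq[of "UNIV::bool set" n] by simp
qed

lemma vecs_Suc: "vecs (Suc k) = Cons True ` vecs k \<union> Cons False ` vecs k"
proof
  show "vecs (Suc k) \<subseteq> Cons True ` vecs k \<union> Cons False ` vecs k"
  proof
    fix v assume "v \<in> vecs (Suc k)"
    then obtain b w where "v = b # w" "length w = k" by (auto simp: vecs_def length_Suc_conv)
    then show "v \<in> Cons True ` vecs k \<union> Cons False ` vecs k"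
      by (cases b) (auto simp: vecs_def)
  qed
qed (auto simp: vecs_def)

lemma vecs_0: "vecs 0 = {[]}" by (auto simp: vecs_def)

definition chi :: "bool list \<Rightarrow> bool list \<Rightarrow> real" where
  "chi v c = (-1) ^ ip_count v c"

lemma sum_vecs_Suc:
  "(\<Sum>v\<in>vecs (Suc k). f v) = (\<Sum>v\<in>vecs k. f (True # v)) + (\<Sum>v\<in>vecs k. f (False # v))"
proof -
  have "(\<Sum>v\<in>vecs (Suc k). f v) = (\<Sum>v\<in>Cons True ` vecs k. f v) + (\<Sum>v\<in>Cons False ` vecs k. f v)"
    unfolding vecs_Suc by (rule sum.union_disjoint) (auto simp: finite_vecs)
  also have "\<dots> = (\<Sum>v\<in>vecs k. f (True # v)) + (\<Sum>v\<in>vecs k. f (False # v))"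
    by (subst sum.reindex, simp, subst sum.reindex, simp_all)
  finally show ?thesis .
qed

lemma product_lemma:
  fixes x y :: real
  shows "(\<Sum>v\<in>vecs (length c). chi v c * (x ^ (length c - hweight v) * y ^ hweight v))
       = (x + y) ^ (length c - hweight c) * (x - y) ^ hweight c"
proof (induction c)
  case Nil then show ?case by (simp add: vecs_0 chi_def)
next
  case (Cons b c)
  let ?k = "length c"
  let ?S = "\<Sum>v\<in>vecs ?k. chi v c * (x ^ (?k - hweight v) * y ^ hweight v)"
  have A: "(\<Sum>v\<in>vecs ?k. chi (True # v) (b # c) * (x ^ (Suc ?k - hweight (True # v)) * y ^ hweight (True # v)))
        = (if b then -y else y) * ?S"
    by (simp add: sum_distrib_left chi_def mult_ac)
  have B: "(\<Sum>v\<in>vecs ?k. chi (False # v) (b # c) * (x ^ (Suc ?k - hweight (False # v)) * y ^ hweight (False # v)))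
        = x * ?S"
    unfolding sum_distrib_left
  proof (rule sum.cong[OF refl])
    fix v assume "v \<in> vecs ?k"
    then have "hweight v \<le> ?k" using hweight_le[of v] by (simp add: vecs_def)
    then have "Suc ?k - hweight v = Suc (?k - hweight v)" by simp
    then show "chi (False # v) (b # c) * (x ^ (Suc ?k - hweight (False # v)) * y ^ hweight (False # v))
       = x * (chi v c * (x ^ (?k - hweight v) * y ^ hweight v))"
      by (simp add: chi_def mult_ac)
  qed
  have hc: "hweight c \<le> ?k" by (rule hweight_le)
  show ?case
    using hc
    by (simp only: length_Cons sum_vecs_Suc A B Cons.IH)
       (cases b, auto simp: algebra_simps Suc_diff_le)
qed

lemma chi_sum:
  assumes lc: "linear_code n C" and v: "v \<in> vecs n"
  shows "(\<Sum>c\<in>C. chi v c) = (if v \<in> dual_code n C then real (card C) else 0)"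
proof (cases "v \<in> dual_code n C")
  case True
  then have "\<forall>c\<in>C. chi v c = 1" by (auto simp: dual_code_def chi_def)
  then show ?thesis using True by simp
next
  case False
  then obtain c0 where c0: "c0 \<in> C" "odd (ip_count v c0)"
    using v by (auto simp: dual_code_def)
  have sub: "C \<subseteq> vecs n" and cl: "\<forall>u\<in>C. \<forall>w\<in>C. vadd u w \<in> C"
    using lc by (auto simp: linear_code_def)
  have vv: "vadd c0 (vadd c0 c) = c" if "c \<in> C" for c
    using that sub c0 vadd_vadd[of c0 c] by (auto simp: vecs_def)
  have "(\<Sum>c\<in>C. chi v c) = (\<Sum>c\<in>C. chi v (vadd c0 c))"
  proof (rule sum.reindex_bij_witness[of _ "vadd c0" "vadd c0"])
    fix c assume "c \<in> C"
    then have "length c0 = length c" using sub c0 by (auto simp: vecs_def)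
    then show "vadd c0 (vadd c0 c) = c" by (rule vadd_vadd)
  next
    fix c assume "c \<in> C"
    then show "vadd c0 c \<in> C" using cl c0 by auto
  next
    fix c assume "c \<in> C"
    then have "length c0 = length c" using sub c0 by (auto simp: vecs_def)
    then show "vadd c0 (vadd c0 c) = c" by (rule vadd_vadd)
  next
    fix c assume "c \<in> C"
    then show "vadd c0 c \<in> C" using cl c0 by auto
  qed (simp add: vv)
  also have "\<dots> = (\<Sum>c\<in>C. - chi v c)"
  proof (rule sum.cong[OF refl])
    fix c assume c: "c \<in> C"
    have l: "length v = length c0" "length v = length c"
      using c c0 sub v by (auto simp: vecs_def)
    show "chi v (vadd c0 c) = - chi v c"
      using ip_vadd[OF l] c0(2) by (auto simp: chi_def)
  qed
  finally have "(\<Sum>c\<in>C. chi v c) = 0" by (simp add: sum_negf)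
  then show ?thesis using False by simp
qed



lemma macwilliams:
  fixes x y :: real
  assumes lc: "linear_code n C"
  shows "real (card C) * weight_enum n (dual_code n C) x y = weight_enum n C (x + y) (x - y)"
proof -
  have sub: "C \<subseteq> vecs n" using lc by (auto simp: linear_code_def)
  have finC: "finite C" using sub finite_vecs finite_subset by blast
  have dsub: "dual_code n C \<subseteq> vecs n" by (auto simp: dual_code_def)
  define T where "T v = x ^ (n - hweight v) * y ^ hweight v" for v
  have "real (card C) * weight_enum n (dual_code n C) x y = (\<Sum>v\<in>dual_code n C. real (card C) * T v)"
    by (simp add: weight_enum_def T_def sum_distrib_left)
  also have "\<dots> = (\<Sum>v\<in>vecs n. if v \<in> dual_code n C then real (card C) * T v else 0)"
    by (subst sum.inter_restrict[OF finite_vecs, symmetric]) (simp add: Int_absorb1 dsub)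
  also have "\<dots> = (\<Sum>v\<in>vecs n. (\<Sum>c\<in>C. chi v c) * T v)"
    by (rule sum.cong[OF refl]) (simp add: chi_sum[OF lc])
  also have "\<dots> = (\<Sum>c\<in>C. \<Sum>v\<in>vecs n. chi v c * T v)"
    by (simp add: sum_distrib_right sum.swap[of _ C])
  also have "\<dots> = (\<Sum>c\<in>C. (x + y) ^ (n - hweight c) * (x - y) ^ hweight c)"
  proof (rule sum.cong[OF refl])
    fix c assume "c \<in> C"
    then have "length c = n" using sub by (auto simp: vecs_def)
    then show "(\<Sum>v\<in>vecs n. chi v c * T v) = (x + y) ^ (n - hweight c) * (x - y) ^ hweight c"
      using product_lemma[of c x y] by (simp add: T_def)
  qed
  also have "\<dots> = weight_enum n C (x + y) (x - y)" by (simp add: weight_enum_def)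
  finally show ?thesis .
qed

lemma we_weights:
  fixes x y :: real
  assumes "D \<subseteq> vecs n"
  shows "weight_enum n D x y = (\<Sum>w\<le>n. real (weight_count D w) * (x ^ (n - w) * y ^ w))"
proof -
  have finD: "finite D" using assms finite_vecs finite_subset by blast
  have le: "hweight c \<le> n" if "c \<in> D" for c using that assms hweight_le[of c] by (auto simp: vecs_def)
  have "(\<Sum>w\<le>n. real (weight_count D w) * (x ^ (n - w) * y ^ w))
      = (\<Sum>w\<le>n. \<Sum>c\<in>D. if hweight c = w then x ^ (n - w) * y ^ w else 0)"
    by (simp add: weight_count_def sum.inter_filter[OF finD, symmetric])
  also have "\<dots> = (\<Sum>c\<in>D. \<Sum>w\<le>n. if hweight c = w then x ^ (n - w) * y ^ w else 0)"
    by (rule sum.swap)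
  also have "\<dots> = (\<Sum>c\<in>D. x ^ (n - hweight c) * y ^ hweight c)"
    by (rule sum.cong[OF refl]) (simp add: le)
  finally show ?thesis by (simp add: weight_enum_def)
qed

lemma fsd_enum:
  fixes x y :: real
  assumes lc: "linear_code n C" and fsd: "formally_self_dual n C"
  shows "weight_enum n (dual_code n C) x y = weight_enum n C x y"
proof -
  have sub: "C \<subseteq> vecs n" using lc by (auto simp: linear_code_def)
  have dsub: "dual_code n C \<subseteq> vecs n" by (auto simp: dual_code_def)
  show ?thesis using fsd
    by (simp add: we_weights[OF sub] we_weights[OF dsub] formally_self_dual_def)
qed

definition hh :: "nat \<Rightarrow> bool list set \<Rightarrow> real \<Rightarrow> real \<Rightarrow> real" where
  "hh m C a b = (\<Sum>c\<in>C. a ^ (m - hweight c div 2) * b ^ (hweight c div 2))"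

lemma we_hh:
  fixes x y :: real
  assumes lc: "linear_code n C" and ev: "even n" and ec: "even_code C"
  shows "weight_enum n C x y = hh (n div 2) C (x^2) (y^2)"
  unfolding weight_enum_def hh_def
proof (rule sum.cong[OF refl])
  fix c assume c: "c \<in> C"
  have sub: "C \<subseteq> vecs n" using lc by (auto simp: linear_code_def)
  have le: "hweight c \<le> n" using c sub hweight_le[of c] by (auto simp: vecs_def)
  obtain k where k: "hweight c = 2 * k" using ec c by (auto simp: even_code_def)
  obtain m where m: "n = 2 * m" using ev by auto
  have "n - hweight c = 2 * (m - k)" using k m by simp
  then show "x ^ (n - hweight c) * y ^ hweight c =
         (x\<^sup>2) ^ (n div 2 - hweight c div 2) * (y\<^sup>2) ^ (hweight c div 2)"
    using k m by (simp add: power_mult)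
qed

lemma hh_scale:
  fixes a b :: real
  assumes "\<forall>c\<in>C. hweight c div 2 \<le> m"
  shows "hh m C (2 * a) (2 * b) = 2 ^ m * hh m C a b"
  unfolding hh_def sum_distrib_left
proof (rule sum.cong[OF refl])
  fix c assume "c \<in> C"
  then have le: "hweight c div 2 \<le> m" using assms by auto
  have "(2::real) ^ (m - hweight c div 2) * 2 ^ (hweight c div 2) = 2 ^ m"
    using le by (simp add: power_add[symmetric])
  then show "(2 * a) ^ (m - hweight c div 2) * (2 * b) ^ (hweight c div 2) =
         2 ^ m * (a ^ (m - hweight c div 2) * b ^ (hweight c div 2))"
    by (simp add: power_mult_distrib)
qed



locale fsd_setup =
  fixes n :: nat and C :: "bool list set"
  assumes lc: "linear_code n C"
    and ev: "even n"
    and cardC: "card C = 2 ^ (n div 2)"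
    and ec: "even_code C"
    and fsd: "formally_self_dual n C"
begin

abbreviation "m \<equiv> n div 2"
abbreviation "H \<equiv> hh (n div 2) C"

lemma mw: "(2::real) ^ m * weight_enum n C x y = weight_enum n C (x + y) (x - y)"
  using macwilliams[OF lc, of x y] fsd_enum[OF lc fsd, of x y] cardC by simp

lemma kle: "\<forall>c\<in>C. hweight c div 2 \<le> m"
proof
  fix c assume "c \<in> C"
  then have "hweight c \<le> n" using lc hweight_le[of c] by (auto simp: linear_code_def vecs_def)
  then show "hweight c div 2 \<le> m" by (simp add: div_le_mono)
qed

lemma hsym:
  fixes a b :: real
  assumes "0 \<le> a" "0 \<le> b"
  shows "H a b = H b a"
proof -
  define x where "x = (sqrt a + sqrt b) / 2"
  define y where "y = (sqrt a - sqrt b) / 2"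
  have 1: "x + y = sqrt a" "x - y = sqrt b" by (simp_all add: x_def y_def field_simps)
  have 2: "x + - y = sqrt b" "x - - y = sqrt a" by (simp_all add: x_def y_def field_simps)
  have "H a b = weight_enum n C (x + y) (x - y)"
    using 1 assms by (simp add: we_hh[OF lc ev ec])
  also have "\<dots> = 2 ^ m * weight_enum n C x y" by (rule mw[symmetric])
  also have "\<dots> = 2 ^ m * weight_enum n C x (- y)" by (simp add: we_hh[OF lc ev ec])
  also have "\<dots> = weight_enum n C (x + - y) (x - - y)" by (rule mw)
  also have "\<dots> = H b a"
    using 2 assms by (simp add: we_hh[OF lc ev ec])
  finally show ?thesis .
qed

lemma hM:
  fixes t :: real
  assumes "-1 \<le> t" "t \<le> 1"
  shows "H (1 + t) (1 - t) = H (1 + sqrt (1 - t^2)) (1 - sqrt (1 - t^2))"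
proof -
  define x where "x = sqrt (1 + t)"
  define y where "y = sqrt (1 - t)"
  have xy: "x * y = sqrt (1 - t^2)"
    by (simp add: x_def y_def real_sqrt_mult[symmetric] algebra_simps power2_eq_square)
  have x2: "x^2 = 1 + t" and y2: "y^2 = 1 - t" using assms by (simp_all add: x_def y_def)
  have "(x + y)^2 = 2 * (1 + sqrt (1 - t^2))"
    using x2 y2 xy by (simp add: power2_sum algebra_simps)
  moreover have "(x - y)^2 = 2 * (1 - sqrt (1 - t^2))"
    using x2 y2 xy by (simp add: power2_diff algebra_simps)
  ultimately have "weight_enum n C (x + y) (x - y) = 2 ^ m * H (1 + sqrt (1 - t^2)) (1 - sqrt (1 - t^2))"
    by (simp only: we_hh[OF lc ev ec] hh_scale[OF kle])
  moreover have "weight_enum n C x y = H (1 + t) (1 - t)"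
    using x2 y2 by (simp add: we_hh[OF lc ev ec])
  ultimately show ?thesis using mw[of x y] by simp
qed

end



abbreviation R :: "rat poly \<Rightarrow> real poly" where "R p \<equiv> map_poly of_rat p"

lemma R_add: "R (p + q) = R p + R q"
  by (rule poly_eqI) (simp add: coeff_map_poly of_rat_add)

lemma R_pCons: "R (pCons a p) = pCons (of_rat a) (R p)"
  by (simp add: map_poly_pCons)

lemma R_smult: "R (smult a p) = smult (of_rat a) (R p)"
  by (rule map_poly_smult) (simp_all add: of_rat_mult)

lemma R_mult: "R (p * q) = R p * R q"
proof (induction p)
  case 0 then show ?case by simp
next
  case (pCons a p)
  show ?case by (simp add: R_add R_smult R_pCons pCons.IH)
qed

lemma R_1: "R 1 = 1" by simp

lemma R_power: "R (p ^ k) = R p ^ k"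
  by (induction k) (simp_all add: R_mult)

lemma R_sum: "R (\<Sum>i\<in>A. f i) = (\<Sum>i\<in>A. R (f i))"
  by (induction A rule: infinite_finite_induct) (simp_all add: R_add)

lemma R_pcompose: "R (pcompose p q) = pcompose (R p) (R q)"
proof (induction p)
  case 0 then show ?case by simp
next
  case (pCons a p)
  show ?case by (simp add: pcompose_pCons R_add R_mult R_pCons pCons.IH)
qed

lemma R_inj: "R p = R q \<Longrightarrow> p = q"
  by (rule poly_eqI) (metis coeff_map_poly of_rat_0 of_rat_eq_iff)

lemma poly_zero_on_interval:
  fixes p :: "real poly"
  assumes "a < b" "\<And>x. a \<le> x \<Longrightarrow> x \<le> b \<Longrightarrow> poly p x = 0"
  shows "p = 0"
proof (rule ccontr)
  assume "p \<noteq> 0"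
  then have "finite {x. poly p x = 0}" by (rule poly_roots_finite)
  moreover have "{a..b} \<subseteq> {x. poly p x = 0}" using assms by auto
  ultimately have "finite {a..b}" by (rule finite_subset[rotated])
  with assms(1) show False using infinite_Icc by blast
qed

lemma poly_bounded_sum:
  fixes x :: "'a::{comm_semiring_0,semiring_1}"
  assumes "degree p \<le> d"
  shows "poly p x = (\<Sum>i\<le>d. coeff p i * x ^ i)"
proof -
  have "poly p x = (\<Sum>i\<le>degree p. coeff p i * x ^ i)" by (rule poly_altdef)
  also have "\<dots> = (\<Sum>i\<le>d. coeff p i * x ^ i)"
    using assms by (intro sum.mono_neutral_left) (auto simp: coeff_eq_0)
  finally show ?thesis .
qed

lemma even_poly:
  fixes p :: "rat poly"
  assumes "\<And>x. poly p (- x) = poly p x"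
  shows "\<exists>q. degree q \<le> degree p div 2 \<and> (\<forall>x. poly p x = poly q (x^2))"
proof -
  have "pcompose p [:0, -1:] = p"
    by (rule poly_ext) (simp add: poly_pcompose assms)
  then have codd: "coeff p i = 0" if "odd i" for i
    using coeff_pcompose_linear[of p "-1" i] that by simp
  define d where "d = degree p"
  define q where "q = Poly (map (\<lambda>i. coeff p (2 * i)) [0..<Suc (d div 2)])"
  have cq: "coeff q j = (if j \<le> d div 2 then coeff p (2 * j) else 0)" for j
    by (simp add: q_def nth_default_def del: upt_Suc)
  have dq: "degree q \<le> d div 2"
    by (rule degree_le) (simp add: cq)
  have "poly p x = poly q (x^2)" for x
  proof -
    have "poly p x = (\<Sum>i\<le>d. coeff p i * x ^ i)" by (simp add: poly_bounded_sum d_def)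
    also have "\<dots> = (\<Sum>i\<in>(\<lambda>j. 2 * j) ` {..d div 2}. coeff p i * x ^ i)"
    proof (rule sum.mono_neutral_right)
      show "(\<lambda>j. 2 * j) ` {..d div 2} \<subseteq> {..d}" by auto
      show "\<forall>i\<in>{..d} - (\<lambda>j. 2 * j) ` {..d div 2}. coeff p i * x ^ i = 0"
      proof
        fix i assume i: "i \<in> {..d} - (\<lambda>j. 2 * j) ` {..d div 2}"
        have "odd i"
        proof
          assume "even i"
          then obtain j where "i = 2 * j" by auto
          with i show False by auto
        qed
        then show "coeff p i * x ^ i = 0" by (simp add: codd)
      qed
    qed simp
    also have "\<dots> = (\<Sum>j\<le>d div 2. coeff p (2 * j) * (x^2) ^ j)"
      by (subst sum.reindex) (auto simp: inj_on_def power_mult)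
    also have "\<dots> = (\<Sum>j\<le>d div 2. coeff q j * (x^2) ^ j)"
      by (rule sum.cong[OF refl]) (simp add: cq)
    also have "\<dots> = poly q (x^2)" using dq by (simp add: poly_bounded_sum)
    finally show ?thesis .
  qed
  with dq show ?thesis unfolding d_def by blast
qed



context fsd_setup
begin

definition Pq :: "rat poly" where
  "Pq = (\<Sum>c\<in>C. [:1, 1:] ^ (m - hweight c div 2) * [:1, -1:] ^ (hweight c div 2))"

lemma finC: "finite C"
  using lc finite_vecs finite_subset by (auto simp: linear_code_def)

lemma PR: "poly (R Pq) t = H (1 + t) (1 - t)"
  by (simp add: Pq_def R_sum R_mult R_power R_pCons poly_sum hh_def)

lemma degPq: "degree Pq \<le> m"
  unfolding Pq_def
proof (rule degree_sum_le[OF finC])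
  fix c assume c: "c \<in> C"
  let ?k = "hweight c div 2"
  have "degree ([:1::rat, 1:] ^ (m - ?k) * [:1, -1:] ^ ?k)
      \<le> degree ([:1::rat, 1:] ^ (m - ?k)) + degree ([:1::rat, -1:] ^ ?k)"
    by (rule degree_mult_le)
  also have "\<dots> \<le> degree [:1::rat, 1:] * (m - ?k) + degree [:1::rat, -1:] * ?k"
    by (intro add_mono degree_power_le)
  also have "\<dots> = m" using kle c by simp
  finally show "degree ([:1::rat, 1:] ^ (m - ?k) * [:1, -1:] ^ ?k) \<le> m" .
qed

lemma Pq_even: "poly Pq (- x) = poly Pq x"
proof -
  have "R Pq - pcompose (R Pq) [:0, -1:] = 0"
  proof (rule poly_zero_on_interval[of "-1" 1])
    fix x :: real assume "-1 \<le> x" "x \<le> 1"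
    then show "poly (R Pq - pcompose (R Pq) [:0, -1:]) x = 0"
      by (simp add: poly_pcompose PR hsym)
  qed simp
  then have "R Pq = R (pcompose Pq [:0, -1:])"
    by (simp add: R_pcompose R_pCons)
  then have "Pq = pcompose Pq [:0, -1:]" by (rule R_inj)
  then have "poly Pq x = poly (pcompose Pq [:0, -1:]) x" by simp
  then show ?thesis by (simp add: poly_pcompose)
qed

lemma main:
  "\<exists>a :: nat \<Rightarrow> rat. (\<Sum>r\<le>n div 8. a r) = 1 \<and>
           (\<forall>t::real. 0 < t \<and> t < 1 \<longrightarrow>
              weight_enum n C (sqrt (1 + t)) (sqrt (1 - t))
                = 2 ^ (n div 2) * (\<Sum>r\<le>n div 8. of_rat (a r) * (t^4 - t^2 + 1) ^ r))"
proof -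
  obtain Q where dQ: "degree Q \<le> degree Pq div 2" and PQ: "\<And>x. poly Pq x = poly Q (x^2)"
    using even_poly[of Pq] Pq_even by blast
  have "Pq = pcompose Q [:0, 0, 1:]"
    by (rule poly_ext) (simp add: poly_pcompose PQ power2_eq_square)
  then have RPQ: "poly (R Pq) t = poly (R Q) (t^2)" for t
    by (simp add: R_pcompose R_pCons poly_pcompose power2_eq_square)
  have "R Q - pcompose (R Q) [:1, -1:] = 0"
  proof (rule poly_zero_on_interval[of 0 1])
    fix v :: real assume v: "0 \<le> v" "v \<le> 1"
    define t where "t = sqrt v"
    define s where "s = sqrt (1 - v)"
    have t2: "t^2 = v" using v by (simp add: t_def)
    have s2: "s^2 = 1 - v" using v by (simp add: s_def)
    have "poly (R Q) v = poly (R Pq) t" using RPQ t2 by simp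
    also have "\<dots> = H (1 + t) (1 - t)" by (rule PR)
    also have "\<dots> = H (1 + s) (1 - s)"
    proof -
      have "t \<le> 1" using v by (simp add: t_def)
      moreover have "0 \<le> t" using v by (simp add: t_def)
      ultimately have "H (1 + t) (1 - t) = H (1 + sqrt (1 - t^2)) (1 - sqrt (1 - t^2))"
        by (intro hM) auto
      then show ?thesis using t2 by (simp add: s_def)
    qed
    also have "\<dots> = poly (R Pq) s" by (rule PR[symmetric])
    also have "\<dots> = poly (R Q) (1 - v)" using RPQ s2 by simp
    finally show "poly (R Q - pcompose (R Q) [:1, -1:]) v = 0"
      by (simp add: poly_pcompose)
  qed simp
  then have "R Q = R (pcompose Q [:1, -1:])"
    by (simp add: R_pcompose R_pCons)
  then have "Q = pcompose Q [:1, -1:]" by (rule R_inj)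
  then have Qsym: "poly Q x = poly Q (1 - x)" for x
    by (metis (no_types, lifting) diff_conv_add_uminus mult_minus1 poly_pCons poly_pcompose pCons_0_0 poly_0 mult_zero_right add_0_right mult.commute)
  define S where "S = pcompose Q [:1/2, 1:]"
  have PS: "poly S y = poly Q (1/2 + y)" for y by (simp add: S_def poly_pcompose)
  have "poly S (- x) = poly S x" for x
    using Qsym[of "1/2 + x"] by (simp add: PS algebra_simps)
  then obtain T where dT: "degree T \<le> degree S div 2" and ST: "\<And>x. poly S x = poly T (x^2)"
    using even_poly[of S] by blast
  have dS: "degree S = degree Q" by (simp add: S_def degree_pcompose)
  define U where "U = pcompose T [:-3/4, 1:]"
  have dU: "degree U \<le> n div 8"
  proof -
    have "degree U \<le> degree T * degree [:-3/4::rat, 1:]" unfolding U_def by (rule degree_pcompose_le)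
    also have "\<dots> = degree T" by simp
    also have "\<dots> \<le> ((n div 2) div 2) div 2"
    proof -
      have q: "degree Q \<le> m div 2" by (rule order_trans[OF dQ div_le_mono[OF degPq]])
      show ?thesis using dT dS div_le_mono[OF q, of 2] by simp
    qed
    also have "\<dots> = n div 8" by (simp add: div_mult2_eq)
    finally show ?thesis .
  qed
  have PU: "poly Pq x = poly U (x^4 - x^2 + 1)" for x
  proof -
    have "poly Pq x = poly Q (x^2)" by (rule PQ)
    also have "\<dots> = poly S (x^2 - 1/2)" by (simp add: PS)
    also have "\<dots> = poly T ((x^2 - 1/2)^2)" by (rule ST)
    also have "\<dots> = poly U (x^4 - x^2 + 1)"
      by (simp add: U_def poly_pcompose power2_eq_square algebra_simps power4_eq_xxxx)
    finally show ?thesis .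
  qed
  have "Pq = pcompose U [:1, 0, -1, 0, 1:]"
    by (rule poly_ext) (simp add: poly_pcompose PU algebra_simps power4_eq_xxxx power2_eq_square)
  then have RPU: "poly (R Pq) t = poly (R U) (t^4 - t^2 + 1)" for t
    by (simp add: R_pcompose R_pCons poly_pcompose algebra_simps power4_eq_xxxx power2_eq_square)
  have dRU: "degree (R U) = degree U" by (rule degree_map_poly) simp
  define a where "a r = coeff U r / 2 ^ m" for r
  have sum1: "(\<Sum>r\<le>n div 8. a r) = 1"
  proof -
    have "poly Pq 0 = of_nat (card C)" by (simp add: Pq_def poly_sum)
    then have "poly U 1 = 2 ^ m" using PU[of 0] cardC by simp
    moreover have "poly U 1 = (\<Sum>r\<le>n div 8. coeff U r)"
      using poly_bounded_sum[OF dU, of 1] by simp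
    ultimately show ?thesis by (simp add: a_def sum_divide_distrib[symmetric])
  qed
  have "weight_enum n C (sqrt (1 + t)) (sqrt (1 - t))
                = 2 ^ (n div 2) * (\<Sum>r\<le>n div 8. of_rat (a r) * (t^4 - t^2 + 1) ^ r)"
    if t: "0 < t" "t < 1" for t :: real
  proof -
    have "weight_enum n C (sqrt (1 + t)) (sqrt (1 - t)) = H (1 + t) (1 - t)"
      using t by (simp add: we_hh[OF lc ev ec])
    also have "\<dots> = poly (R U) (t^4 - t^2 + 1)" by (simp add: PR[symmetric] RPU)
    also have "\<dots> = (\<Sum>r\<le>n div 8. coeff (R U) r * (t^4 - t^2 + 1) ^ r)"
      using dU dRU by (simp add: poly_bounded_sum)
    also have "\<dots> = 2 ^ (n div 2) * (\<Sum>r\<le>n div 8. of_rat (a r) * (t^4 - t^2 + 1) ^ r)"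
      by (simp add: sum_distrib_left a_def coeff_map_poly of_rat_divide of_rat_power)
    finally show ?thesis .
  qed
  with sum1 show ?thesis by blast
qed

end


theorem lemma5:
  fixes n :: nat and C :: "bool list set"
  assumes "linear_code n C"
    and "even n"
    and "card C = 2 ^ (n div 2)"
    and "even_code C"
    and "formally_self_dual n C"
  shows "\<exists>a :: nat \<Rightarrow> rat. (\<Sum>r\<le>n div 8. a r) = 1 \<and>
           (\<forall>t::real. 0 < t \<and> t < 1 \<longrightarrow>
              weight_enum n C (sqrt (1 + t)) (sqrt (1 - t))
                = 2 ^ (n div 2) * (\<Sum>r\<le>n div 8. of_rat (a r) * (t^4 - t^2 + 1) ^ r))"
proof -
  interpret fsd_setup n C using assms by unfold_locales
  show ?thesis by (rule main)
qed

end
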